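(* Let $(K,S^0)$ be a divided simplicial complex with associated layered complex $(K,C,S)$, and let $s,p$ be simplices of $K$ such that (i) $p$ is an intermediate simplex of $(K,C,S)$, (ii) $p$ is principal in $K$, (iii) $s$ is a face of $p$ which is free in $K$, and (iv) every simplex $t$ of $S$ which is a proper face of $p$ is a proper face of $s$. Let $K_1=K-\{s,p\}$. Then $K_1$ has the same vertex set as $K$, so that $(K_1,S^0)$ is a divided simplicial complex, and the layered complex $(K_1,C,S)$ is the layered complex associated to the divided complex $(K_1,S^0)$.
   Context: A simplicial complex $K$ is a set of finite nonempty sets (simplices) closed under passing to nonempty subsets (faces); $K^0$ is its vertex set. A simplex is principal in $K$ if it is not a proper face of any simplex of $K$; $s$ is free in $K$ if it is a proper face of a principal simplex $p$ and of no other simplex of $K$. A layered simplicial complex is a triple $(K,C,S)$ with $C,S$ disjoint subcomplexes of $K$; its intermediate simplices are the simplices lying in neither $C$ nor $S$. A divided simplicial complex is a pair $(K,S^0)$ with $S^0\subseteq K^0$; its associated layered complex $(K,C,S)$ has $S$ = simplices all of whose vertices lie in $S^0$ and $C$ = simplices all of whose vertices lie in $K^0-S^0$. *)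

theory Defs
  imports Main
begin

definition simplicial_complex :: "'a set set \<Rightarrow> bool" where
  "simplicial_complex K \<longleftrightarrow>
     (\<forall>s\<in>K. finite s \<and> s \<noteq> {}) \<and>
     (\<forall>s\<in>K. \<forall>t. t \<subseteq> s \<and> t \<noteq> {} \<longrightarrow> t \<in> K)"

definition vertices :: "'a set set \<Rightarrow> 'a set" where
  "vertices K = \<Union>K"

definition subcomplex :: "'a set set \<Rightarrow> 'a set set \<Rightarrow> bool" where
  "subcomplex L K \<longleftrightarrow> L \<subseteq> K \<and> simplicial_complex L"

definition principal :: "'a set set \<Rightarrow> 'a set \<Rightarrow> bool" where
  "principal K p \<longleftrightarrow> p \<in> K \<and> \<not> (\<exists>t\<in>K. p \<subset> t)"

definition free :: "'a set set \<Rightarrow> 'a set \<Rightarrow> bool" where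
  "free K s \<longleftrightarrow> s \<in> K \<and>
     (\<exists>p. principal K p \<and> s \<subset> p \<and> (\<forall>t\<in>K. s \<subset> t \<longrightarrow> t = p))"

definition layered_complex :: "'a set set \<Rightarrow> 'a set set \<Rightarrow> 'a set set \<Rightarrow> bool" where
  "layered_complex K C S \<longleftrightarrow> simplicial_complex K \<and> subcomplex C K \<and> subcomplex S K \<and> C \<inter> S = {}"

definition intermediate :: "'a set set \<Rightarrow> 'a set set \<Rightarrow> 'a set set \<Rightarrow> 'a set \<Rightarrow> bool" where
  "intermediate K C S s \<longleftrightarrow> s \<in> K \<and> s \<notin> C \<and> s \<notin> S"

definition divided_complex :: "'a set set \<Rightarrow> 'a set \<Rightarrow> bool" where
  "divided_complex K S0 \<longleftrightarrow> simplicial_complex K \<and> S0 \<subseteq> vertices K"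

definition assoc_S :: "'a set set \<Rightarrow> 'a set \<Rightarrow> 'a set set" where
  "assoc_S K S0 = {s\<in>K. s \<subseteq> S0}"

definition assoc_C :: "'a set set \<Rightarrow> 'a set \<Rightarrow> 'a set set" where
  "assoc_C K S0 = {s\<in>K. s \<subseteq> vertices K - S0}"

end

theory Submission
  imports Defs
begin

theorem lemma4p9:
  fixes K :: "'a set set" and S0 :: "'a set" and s p :: "'a set"
  assumes div: "divided_complex K S0"
    and C_def: "C = assoc_C K S0" and S_def: "S = assoc_S K S0"
    and sK: "s \<in> K" and pK: "p \<in> K"
    and inter: "intermediate K C S p"
    and princ: "principal K p"
    and face: "s \<subseteq> p"
    and fr: "free K s"
    and sface: "\<forall>t\<in>S. t \<subset> p \<longrightarrow> t \<subset> s"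
    and K1_def: "K1 = K - {s, p}"
  shows "vertices K1 = vertices K \<and> divided_complex K1 S0
         \<and> layered_complex K1 C S
         \<and> assoc_C K1 S0 = C \<and> assoc_S K1 S0 = S"
proof -
  have sc: "simplicial_complex K" and S0V: "S0 \<subseteq> vertices K"
    using div by (auto simp: divided_complex_def)
  have ne: "\<And>t. t \<in> K \<Longrightarrow> t \<noteq> {} \<and> finite t" using sc unfolding simplicial_complex_def by blast
  have cl: "\<And>t u. t \<in> K \<Longrightarrow> u \<subseteq> t \<Longrightarrow> u \<noteq> {} \<Longrightarrow> u \<in> K"
    using sc unfolding simplicial_complex_def by blast
  obtain q where q: "principal K q" "s \<subset> q" "\<forall>t\<in>K. s \<subset> t \<longrightarrow> t = q"
    using fr by (auto simp: free_def)
  have sp: "s \<subset> p"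
  proof (rule ccontr)
    assume "\<not> s \<subset> p" hence "s = p" using face by auto
    thus False using q princ pK by (auto simp: principal_def)
  qed
  have cof: "\<And>t. t \<in> K \<Longrightarrow> s \<subset> t \<Longrightarrow> t = p" using q sp pK by metis
  have pV: "p \<subseteq> vertices K" using pK by (auto simp: vertices_def)
  obtain u where u: "u \<in> p" "u \<in> S0"
    using inter pV unfolding intermediate_def C_def assoc_C_def by auto
  have uK: "{u} \<in> K" using cl[OF pK] u by auto
  have uS: "{u} \<in> S" using uK u unfolding S_def assoc_S_def by auto
  have sne: "s \<noteq> {}" using ne sK by auto
  have up: "{u} \<subset> p" using sp sne u by auto
  have us': "{u} \<subset> s" using sface uS up by blast
  have us: "u \<in> s" using us' by auto
  have sC: "s \<notin> C" using us u unfolding C_def assoc_C_def by auto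
  have sS: "s \<notin> S" using sface sp unfolding S_def assoc_S_def by auto
  have pC: "p \<notin> C" "p \<notin> S" using inter by (auto simp: intermediate_def)
  have VK: "vertices K1 = vertices K"
  proof
    show "vertices K1 \<subseteq> vertices K" using K1_def by (auto simp: vertices_def)
  next
    show "vertices K \<subseteq> vertices K1"
    proof
      fix v assume "v \<in> vertices K"
      then obtain t where t: "t \<in> K" "v \<in> t" by (auto simp: vertices_def)
      have vK: "{v} \<in> K" using cl[OF t(1)] t(2) by auto
      have "{v} \<noteq> p" using sp sne by auto
      moreover have "{v} \<noteq> s"
      proof
        assume "{v} = s"
        hence "u = v" using us by auto
        thus False using us' \<open>{v} = s\<close> by auto
      qed
      ultimately have "{v} \<in> K1" using vK K1_def by auto
      thus "v \<in> vertices K1" by (auto simp: vertices_def)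
    qed
  qed
  have sc1: "simplicial_complex K1"
    unfolding simplicial_complex_def
  proof (intro conjI ballI allI impI)
    fix t assume "t \<in> K1" thus "finite t" "t \<noteq> {}" using ne K1_def by auto
  next
    fix t w assume t: "t \<in> K1" and w: "w \<subseteq> t \<and> w \<noteq> {}"
    have tK: "t \<in> K" "t \<noteq> s" "t \<noteq> p" using t K1_def by auto
    have "w \<in> K" using cl tK w by blast
    moreover have "w \<noteq> s" using cof tK w by blast
    moreover have "w \<noteq> p" using princ tK w by (auto simp: principal_def)
    ultimately show "w \<in> K1" using K1_def by auto
  qed
  have AC: "assoc_C K1 S0 = C" using VK sC pC unfolding C_def assoc_C_def K1_def by auto
  have AS: "assoc_S K1 S0 = S" using sS pC unfolding S_def assoc_S_def K1_def by auto
  have subC: "subcomplex C K1"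
    unfolding subcomplex_def simplicial_complex_def
  proof (intro conjI ballI allI impI)
    show "C \<subseteq> K1" using AC unfolding assoc_C_def by auto
  next
    fix t assume "t \<in> C" thus "finite t" "t \<noteq> {}" using ne unfolding C_def assoc_C_def by auto
  next
    fix t w assume "t \<in> C" "w \<subseteq> t \<and> w \<noteq> {}"
    thus "w \<in> C" using cl unfolding C_def assoc_C_def by blast
  qed
  have subS: "subcomplex S K1"
    unfolding subcomplex_def simplicial_complex_def
  proof (intro conjI ballI allI impI)
    show "S \<subseteq> K1" using AS unfolding assoc_S_def by auto
  next
    fix t assume "t \<in> S" thus "finite t" "t \<noteq> {}" using ne unfolding S_def assoc_S_def by auto
  next
    fix t w assume "t \<in> S" "w \<subseteq> t \<and> w \<noteq> {}"
    thus "w \<in> S" using cl unfolding S_def assoc_S_def by blast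
  qed
  have disj: "C \<inter> S = {}" using ne unfolding C_def S_def assoc_C_def assoc_S_def by fastforce
  show ?thesis using VK sc1 S0V AC AS subC subS disj
    by (auto simp: divided_complex_def layered_complex_def)
qed

end
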